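(* Let $c>0$, $\lambda>0$, and for $t>0$, $\mathbf{y}\in\mathbb{R}^3$ with $\|\mathbf{y}\|<ct$ let $$p(\mathbf{y},t)=\frac{\lambda}{2c}\frac{1}{\pi(e^{\lambda t}-1)}\sum_{k=0}^{\infty}\left(\frac{\lambda}{2c}\right)^{k+1}\frac{\left(\sqrt{c^2t^2-\|\mathbf{y}\|^2}\right)^{k-1}}{\Gamma(\frac{k+1}{2})\Gamma(\frac{k+3}{2})},$$ the density of the absolutely continuous component of the law of the three-dimensional random flight $\mathbf{Y}_3(t)$ described in the context. Then $u=p$ satisfies, in $\{(\mathbf{y},t):t>0,\|\mathbf{y}\|<ct\}$, the non-homogeneous telegraph-type equation with variable coefficients $$\left(\frac{\partial^2}{\partial t^2}+c_1(t)\frac{\partial}{\partial t}-c^2\Delta\right)u(\mathbf{y},t)=c_2(t)u(\mathbf{y},t)+c_3(\mathbf{y},t),$$ where $\Delta=\sum_{j=1}^3\partial^2/\partial y_j^2$ and $$c_1(t)=\frac{2\lambda e^{\lambda t}}{e^{\lambda t}-1},\qquad c_2(t)=-\frac{\lambda^2}{e^{\lambda t}-1},\qquad c_3(\mathbf{y},t)=\frac{\lambda^2}{\sqrt{\pi^3}(e^{\lambda t}-1)}\frac{(c^2t^2-\|\mathbf{y}\|^2)^{-3/2}}{\Gamma(-\frac12)}.$$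
   Context: The random flight $\mathbf{Y}_3(t)$ in $\mathbb{R}^3$: a particle starts at the origin, moves at constant speed $c$, with independent uniformly distributed directions on $S^2$ for successive segments; given $\mathcal{N}_3(t)=k$ changes of direction in $(0,t)$, the segment durations $(\tau_1,\dots,\tau_{k+1})$, $\sum\tau_j=t$, have the rescaled Dirichlet law with all parameters $1/2$, and $P\{\mathcal{N}_3(t)=k\}=\frac{1}{E_{1,2}(\lambda t)}\frac{(\lambda t)^k}{(k+1)!}=\frac{(\lambda t)^{k+1}}{(e^{\lambda t}-1)(k+1)!}$. The function $p$ above is the density of the absolutely continuous part of the law of $\mathbf{Y}_3(t)$. *)

theory Defs
  imports "HOL-Analysis.Analysis"
begin

definition flight_density :: "real \<Rightarrow> real \<Rightarrow> real ^ 3 \<Rightarrow> real \<Rightarrow> real" where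
  "flight_density c lam y t =
     lam / (2 * c) * (1 / (pi * (exp (lam * t) - 1))) *
     (\<Sum>k. (lam / (2 * c)) ^ (k + 1) *
            (sqrt (c\<^sup>2 * t\<^sup>2 - (norm y)\<^sup>2)) powr (real k - 1) /
            (Gamma ((real k + 1) / 2) * Gamma ((real k + 3) / 2)))"

definition dt :: "(real ^ 3 \<Rightarrow> real \<Rightarrow> real) \<Rightarrow> real ^ 3 \<Rightarrow> real \<Rightarrow> real" where
  "dt u y t = deriv (\<lambda>s. u y s) t"

definition dy :: "3 \<Rightarrow> (real ^ 3 \<Rightarrow> real \<Rightarrow> real) \<Rightarrow> real ^ 3 \<Rightarrow> real \<Rightarrow> real" where
  "dy j u y t = deriv (\<lambda>s. u (y + s *\<^sub>R axis j 1) t) 0"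

definition laplacian :: "(real ^ 3 \<Rightarrow> real \<Rightarrow> real) \<Rightarrow> real ^ 3 \<Rightarrow> real \<Rightarrow> real" where
  "laplacian u y t = (\<Sum>j\<in>UNIV. dy j (dy j u) y t)"

definition coef1 :: "real \<Rightarrow> real \<Rightarrow> real" where
  "coef1 lam t = 2 * lam * exp (lam * t) / (exp (lam * t) - 1)"

definition coef2 :: "real \<Rightarrow> real \<Rightarrow> real" where
  "coef2 lam t = - (lam\<^sup>2 / (exp (lam * t) - 1))"

definition coef3 :: "real \<Rightarrow> real \<Rightarrow> real ^ 3 \<Rightarrow> real \<Rightarrow> real" where
  "coef3 c lam y t = lam\<^sup>2 / (sqrt (pi ^ 3) * (exp (lam * t) - 1)) *
      ((c\<^sup>2 * t\<^sup>2 - (norm y)\<^sup>2) powr (-3/2) / Gamma (-1/2))"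

end

theory Submission
  imports Defs
begin


definition DD :: "nat \<Rightarrow> real" where
  "DD k = Gamma ((real k + 1) / 2) * Gamma ((real k + 3) / 2)"

lemma DD_pos: "DD k > 0"
  unfolding DD_def by (intro mult_pos_pos Gamma_real_pos) auto

lemma Gamma_step: "x > 0 \<Longrightarrow> Gamma (x + 1) = x * Gamma (x::real)"
  by (rule Gamma_plus1) (auto elim!: nonpos_Ints_cases)

lemma DD_rec: "DD (k + 2) = DD k * ((real k + 1) / 2) * ((real k + 3) / 2)"
proof -
  have a: "(real (k+2) + 1) / 2 = (real k + 1)/2 + 1" by simp
  have b: "(real (k+2) + 3) / 2 = (real k + 3)/2 + 1" by simp
  have g1: "Gamma ((real k + 1)/2 + 1) = (real k + 1)/2 * Gamma ((real k + 1)/2)"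
    by (rule Gamma_step) simp
  have g2: "Gamma ((real k + 3)/2 + 1) = (real k + 3)/2 * Gamma ((real k + 3)/2)"
    by (rule Gamma_step) simp
  show ?thesis unfolding DD_def a b g1 g2 by (simp only: ac_simps)
qed

lemma DD_lower: "DD k * 2 ^ k \<ge> min (DD 0) (DD 1 * 2) * fact k"
proof -
  define m where "m = min (DD 0) (DD 1 * 2)"
  have m0: "m > 0" using DD_pos by (simp add: m_def)
  have "DD k * 2 ^ k \<ge> m * fact k \<and> DD (Suc k) * 2 ^ (Suc k) \<ge> m * fact (Suc k)" for k
  proof (induction k)
    case 0 then show ?case by (simp add: m_def)
  next
    case (Suc k)
    have "m * fact (k+2) = m * fact k * ((real k + 1) * (real k + 2))"
      by (simp add: algebra_simps)
    also have "\<dots> \<le> m * fact k * ((real k + 1) * (real k + 3))"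
      using m0 by (intro mult_left_mono) auto
    also have "\<dots> \<le> DD k * 2 ^ k * ((real k + 1) * (real k + 3))"
      using Suc.IH by (intro mult_right_mono) auto
    also have "\<dots> = DD (k+2) * 2 ^ (k+2)" unfolding DD_rec by (simp add: field_simps)
    finally show ?case using Suc.IH by (simp add: algebra_simps)
  qed
  then show ?thesis by (simp add: m_def)
qed

definition bb :: "real \<Rightarrow> nat \<Rightarrow> real" where
  "bb a k = a ^ (k + 1) / DD k"

lemma bb_summable: "summable (\<lambda>n. bb a n * y ^ n)"
proof -
  define m where "m = min (DD 0) (DD 1 * 2)"
  have m0: "m > 0" using DD_pos by (simp add: m_def)
  have s: "summable (\<lambda>n. \<bar>a\<bar> / m * (inverse (fact n) * (2 * \<bar>a\<bar> * \<bar>y\<bar>) ^ n))"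
    by (intro summable_mult summable_exp)
  show ?thesis
  proof (rule summable_comparison_test[OF _ s], intro exI allI impI)
    fix n :: nat
    have D: "DD n \<ge> m * fact n / 2 ^ n" using DD_lower[of n] by (simp add: m_def field_simps)
    have "norm (bb a n * y ^ n) = \<bar>a\<bar> ^ (n+1) * \<bar>y\<bar> ^ n / DD n"
      using DD_pos[of n] by (simp add: bb_def abs_mult power_abs)
    also have "\<dots> \<le> \<bar>a\<bar> ^ (n+1) * \<bar>y\<bar> ^ n / (m * fact n / 2 ^ n)"
      by (intro divide_left_mono D) (use m0 DD_pos[of n] in auto)
    also have "\<dots> = \<bar>a\<bar> / m * (inverse (fact n) * (2 * \<bar>a\<bar> * \<bar>y\<bar>) ^ n)"
      by (simp add: field_simps power_mult_distrib)
    finally show "norm (bb a n * y ^ n) \<le> \<bar>a\<bar> / m * (inverse (fact n) * (2 * \<bar>a\<bar> * \<bar>y\<bar>) ^ n)" .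
  qed
qed

lemma DD_rec': "DD (Suc (Suc k)) = DD k * ((real k + 1) / 2) * ((real k + 3) / 2)"
  using DD_rec[of k] by simp

lemma bb_rec: "(real (k+2) ^ 2 - 1) * bb a (k+2) = 4 * a ^ 2 * bb a k"
proof -
  define P where "P = (real k+1)*(real k+3)"
  have P0: "P > 0" by (simp add: P_def)
  have e: "(real (k+2) ^ 2 - 1) = P" by (simp add: P_def power2_eq_square algebra_simps)
  have d: "DD (k+2) = DD k * P / 4" unfolding DD_rec P_def by simp
  show ?thesis unfolding e unfolding bb_def d
    using P0 DD_pos[of k] by (simp add: field_simps power2_eq_square)
qed

lemma bb0: "bb a 0 = 2 * a / pi"
proof -
  have "Gamma (3/2::real) = Gamma (1/2 + 1)" by simp
  also have "\<dots> = sqrt pi / 2" by (subst Gamma_step) (auto simp: Gamma_one_half_real)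
  finally have g: "Gamma (3/2::real) = sqrt pi / 2" .
  have "DD 0 = sqrt pi * (sqrt pi / 2)" by (simp add: DD_def Gamma_one_half_real g)
  also have "\<dots> = pi / 2" by simp
  finally have "DD 0 = pi / 2" .
  then show ?thesis unfolding bb_def by (simp only: power_one_right) (simp add: field_simps)
qed




definition G :: "real \<Rightarrow> real \<Rightarrow> real" where "G a s = (\<Sum>n. bb a n * s ^ n)"
definition G1 :: "real \<Rightarrow> real \<Rightarrow> real" where "G1 a s = (\<Sum>n. diffs (bb a) n * s ^ n)"
definition G2 :: "real \<Rightarrow> real \<Rightarrow> real" where "G2 a s = (\<Sum>n. diffs (diffs (bb a)) n * s ^ n)"

lemma bb1_summable: "summable (\<lambda>n. diffs (bb a) n * y ^ n)"
  by (rule termdiff_converges_all) (rule bb_summable)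

lemma bb2_summable: "summable (\<lambda>n. diffs (diffs (bb a)) n * y ^ n)"
  by (rule termdiff_converges_all) (rule bb1_summable)

lemma G_deriv: "(G a has_real_derivative G1 a s) (at s)"
  unfolding G_def[abs_def] G1_def
  by (rule termdiffs_strong_converges_everywhere) (rule bb_summable)

lemma G1_deriv: "(G1 a has_real_derivative G2 a s) (at s)"
  unfolding G1_def[abs_def] G2_def
  by (rule termdiffs_strong_converges_everywhere) (rule bb1_summable)

lemma G_ode: "s^2 * G2 a s + s * G1 a s - G a s - 4 * a^2 * s^2 * G a s = - (2 * a / pi)"
proof -
  define f where "f n = real n * (real n - 1) * bb a n * s ^ n" for n
  define g where "g n = real n * bb a n * s ^ n" for n
  define h where "h n = bb a n * s ^ n" for n
  define j where "j n = (if n < 2 then 0 else bb a (n - 2)) * s ^ n" for n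
  have "(\<lambda>n. s^2 * (diffs (diffs (bb a)) n * s ^ n)) sums (s^2 * G2 a s)"
    unfolding G2_def by (intro sums_mult summable_sums bb2_summable)
  moreover have "(\<lambda>n. s^2 * (diffs (diffs (bb a)) n * s ^ n)) = (\<lambda>n. f (Suc (Suc n)))"
    by (auto simp: f_def diffs_def power2_eq_square algebra_simps)
  ultimately have "(\<lambda>n. f (Suc (Suc n))) sums (s^2 * G2 a s)" by simp
  then have "(\<lambda>n. f (Suc n)) sums (s^2 * G2 a s + f 1)" by (subst (asm) sums_Suc_iff) simp
  then have "f sums (s^2 * G2 a s + f 1 + f 0)" by (subst (asm) sums_Suc_iff)
  moreover have "f 1 = 0" "f 0 = 0" by (simp_all add: f_def)
  ultimately have F: "f sums (s^2 * G2 a s)" by simp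
  have "(\<lambda>n. s * (diffs (bb a) n * s ^ n)) sums (s * G1 a s)"
    unfolding G1_def by (intro sums_mult summable_sums bb1_summable)
  moreover have "(\<lambda>n. s * (diffs (bb a) n * s ^ n)) = (\<lambda>n. g (Suc n))"
    by (auto simp: g_def diffs_def algebra_simps)
  ultimately have "(\<lambda>n. g (Suc n)) sums (s * G1 a s)" by simp
  then have "g sums (s * G1 a s + g 0)" by (subst (asm) sums_Suc_iff)
  moreover have "g 0 = 0" by (simp add: g_def)
  ultimately have Gs: "g sums (s * G1 a s)" by simp
  have H: "h sums G a s" unfolding h_def G_def by (intro summable_sums bb_summable)
  have "(\<lambda>n. s^2 * (bb a n * s ^ n)) sums (s^2 * G a s)"
    unfolding G_def by (intro sums_mult summable_sums bb_summable)
  moreover have "(\<lambda>n. s^2 * (bb a n * s ^ n)) = (\<lambda>n. j (Suc (Suc n)))"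
    by (auto simp: j_def power2_eq_square algebra_simps)
  ultimately have "(\<lambda>n. j (Suc (Suc n))) sums (s^2 * G a s)" by simp
  then have "(\<lambda>n. j (Suc n)) sums (s^2 * G a s + j 1)" by (subst (asm) sums_Suc_iff) simp
  then have "j sums (s^2 * G a s + j 1 + j 0)" by (subst (asm) sums_Suc_iff)
  moreover have "j 1 = 0" "j 0 = 0" by (simp_all add: j_def)
  ultimately have J: "j sums (s^2 * G a s)" by simp
  have S: "(\<lambda>n. f n + g n - h n - 4 * a^2 * j n) sums
      (s^2 * G2 a s + s * G1 a s - G a s - 4 * a^2 * (s^2 * G a s))"
    by (intro sums_add sums_diff sums_mult F Gs H J)
  have E: "(\<lambda>n. f n + g n - h n - 4 * a^2 * j n) = (\<lambda>n. if n = 0 then - bb a 0 else 0)"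
  proof
    fix n
    show "f n + g n - h n - 4 * a^2 * j n = (if n = 0 then - bb a 0 else 0)"
    proof (cases n)
      case 0 then show ?thesis by (simp add: f_def g_def h_def j_def)
    next
      case (Suc m)
      show ?thesis
      proof (cases m)
        case 0 then show ?thesis using Suc by (simp add: f_def g_def h_def j_def)
      next
        case (Suc k)
        have r: "(real (k+2) ^ 2 - 1) * bb a (k+2) = 4 * a ^ 2 * bb a k" by (rule bb_rec)
        have "f n + g n - h n - 4 * a^2 * j n
            = ((real (k+2) ^ 2 - 1) * bb a (k+2) - 4 * a ^ 2 * bb a k) * s ^ n"
          using \<open>n = Suc m\<close> Suc by (simp add: f_def g_def h_def j_def power2_eq_square algebra_simps)
        also have "\<dots> = 0" using r by simp
        finally show ?thesis using \<open>n = Suc m\<close> by simp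
      qed
    qed
  qed
  have "(\<lambda>n. if n = 0 then - bb a 0 else 0) sums (- bb a 0)"
    using sums_single[of 0 "\<lambda>_. - bb a 0"] by simp
  then have "s^2 * G2 a s + s * G1 a s - G a s - 4 * a^2 * (s^2 * G a s) = - bb a 0"
    using sums_unique2[OF S[unfolded E]] by blast
  then show ?thesis by (simp add: bb0)
qed




definition F :: "real \<Rightarrow> real \<Rightarrow> real" where
  "F a q = G a (sqrt q) / sqrt q"
definition F1 :: "real \<Rightarrow> real \<Rightarrow> real" where
  "F1 a q = (sqrt q * G1 a (sqrt q) - G a (sqrt q)) / (2 * sqrt q ^ 3)"
definition F2 :: "real \<Rightarrow> real \<Rightarrow> real" where
  "F2 a q = (sqrt q ^ 2 * G2 a (sqrt q) - 3 * sqrt q * G1 a (sqrt q) + 3 * G a (sqrt q)) / (4 * sqrt q ^ 5)"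

lemma F_deriv:
  assumes q: "q > 0"
  shows "(F a has_real_derivative F1 a q) (at q)"
proof -
  have s: "(sqrt has_real_derivative inverse (sqrt q) / 2) (at q)" using q by (rule DERIV_real_sqrt)
  have g: "((\<lambda>q. G a (sqrt q)) has_real_derivative G1 a (sqrt q) * (inverse (sqrt q) / 2)) (at q)"
    by (rule DERIV_chain2[OF G_deriv s])
  have D: "((\<lambda>q. G a (sqrt q) / sqrt q) has_real_derivative
     (G1 a (sqrt q) * (inverse (sqrt q) / 2) * sqrt q - G a (sqrt q) * (inverse (sqrt q) / 2)) / (sqrt q * sqrt q)) (at q)"
    by (rule DERIV_divide[OF g s]) (use q in simp)
  have sq: "sqrt q > 0" using q by simp
  show ?thesis unfolding F_def[abs_def]
    by (rule DERIV_cong[OF D]) (use sq in \<open>simp add: F1_def field_simps power3_eq_cube\<close>)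
qed

lemma F1_deriv:
  assumes q: "q > 0"
  shows "(F1 a has_real_derivative F2 a q) (at q)"
proof -
  have s: "(sqrt has_real_derivative inverse (sqrt q) / 2) (at q)" using q by (rule DERIV_real_sqrt)
  have g: "((\<lambda>q. G a (sqrt q)) has_real_derivative G1 a (sqrt q) * (inverse (sqrt q) / 2)) (at q)"
    by (rule DERIV_chain2[OF G_deriv s])
  have g1: "((\<lambda>q. G1 a (sqrt q)) has_real_derivative G2 a (sqrt q) * (inverse (sqrt q) / 2)) (at q)"
    by (rule DERIV_chain2[OF G1_deriv s])
  have N: "((\<lambda>q. sqrt q * G1 a (sqrt q) - G a (sqrt q)) has_real_derivative
      (sqrt q * (G2 a (sqrt q) * (inverse (sqrt q) / 2)) + inverse (sqrt q) / 2 * G1 a (sqrt q)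
       - G1 a (sqrt q) * (inverse (sqrt q) / 2))) (at q)"
    by (intro DERIV_diff DERIV_mult' s g g1)
  have Dn: "((\<lambda>q. 2 * sqrt q ^ 3) has_real_derivative (2 * (real 3 * (inverse (sqrt q) / 2 * sqrt q ^ (3 - Suc 0))))) (at q)"
    by (intro DERIV_cmult DERIV_power s)
  have sq: "sqrt q > 0" using q by simp
  have D: "((\<lambda>q. (sqrt q * G1 a (sqrt q) - G a (sqrt q)) / (2 * sqrt q ^ 3)) has_real_derivative
     ((sqrt q * (G2 a (sqrt q) * (inverse (sqrt q) / 2)) + inverse (sqrt q) / 2 * G1 a (sqrt q)
       - G1 a (sqrt q) * (inverse (sqrt q) / 2)) * (2 * sqrt q ^ 3) - (sqrt q * G1 a (sqrt q) - G a (sqrt q)) * (2 * (real 3 * (inverse (sqrt q) / 2 * sqrt q ^ (3 - Suc 0)))))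
      / ((2 * sqrt q ^ 3) * (2 * sqrt q ^ 3))) (at q)"
    by (rule DERIV_divide[OF N Dn]) (use sq in simp)
  show ?thesis unfolding F1_def[abs_def]
  proof (rule DERIV_cong[OF D])
    define s where "s = sqrt q"
    have s0: "s > 0" using sq by (simp add: s_def)
    show "((sqrt q * (G2 a (sqrt q) * (inverse (sqrt q) / 2)) + inverse (sqrt q) / 2 * G1 a (sqrt q)
       - G1 a (sqrt q) * (inverse (sqrt q) / 2)) * (2 * sqrt q ^ 3) - (sqrt q * G1 a (sqrt q) - G a (sqrt q)) * (2 * (real 3 * (inverse (sqrt q) / 2 * sqrt q ^ (3 - Suc 0)))))
      / ((2 * sqrt q ^ 3) * (2 * sqrt q ^ 3)) = F2 a q"
      unfolding F2_def s_def[symmetric] using s0 by (simp add: field_simps eval_nat_numeral)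
  qed
qed

lemma F_ode:
  assumes q: "q > 0"
  shows "q * F2 a q + 2 * F1 a q - a^2 * F a q = - (a / (2 * pi)) / sqrt q ^ 3"
proof -
  define s where "s = sqrt q"
  have sq: "s > 0" using q by (simp add: s_def)
  have qs: "q = s^2" using q by (simp add: s_def)
  have o: "s^2 * G2 a s + s * G1 a s - G a s - 4 * a^2 * s^2 * G a s = - (2 * a / pi)" by (rule G_ode)
  have "q * F2 a q + 2 * F1 a q - a^2 * F a q
      = (s^2 * G2 a s + s * G1 a s - G a s - 4 * a^2 * s^2 * G a s) / (4 * s^3)"
    unfolding F_def F1_def F2_def s_def[symmetric] qs using sq
    by (simp add: field_simps eval_nat_numeral)
  also have "\<dots> = - (a / (2 * pi)) / sqrt q ^ 3" unfolding o s_def[symmetric] using sq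
    by (simp add: field_simps)
  finally show ?thesis .
qed




lemma u_eq:
  assumes c: "c > 0" and z: "norm z < c * t"
  shows "flight_density c lam z t =
     lam / (2 * c) * (1 / (pi * (exp (lam * t) - 1))) * F (lam / (2*c)) (c\<^sup>2 * t\<^sup>2 - (norm z)\<^sup>2)"
proof -
  define a where "a = lam / (2*c)"
  define q where "q = c\<^sup>2 * t\<^sup>2 - (norm z)\<^sup>2"
  have "(norm z)\<^sup>2 < (c * t)\<^sup>2" using z by (intro power_strict_mono) auto
  then have q0: "q > 0" by (simp add: q_def power_mult_distrib)
  define s where "s = sqrt q"
  have s0: "s > 0" using q0 by (simp add: s_def)
  have t: "a ^ (k + 1) * s powr (real k - 1) / (Gamma ((real k + 1) / 2) * Gamma ((real k + 3) / 2))
      = bb a k * s ^ k / s" for k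
    using s0 by (simp add: powr_diff powr_realpow bb_def DD_def)
  have "(\<Sum>k. a ^ (k + 1) * s powr (real k - 1) / (Gamma ((real k + 1) / 2) * Gamma ((real k + 3) / 2)))
     = G a s / s" unfolding t G_def by (rule suminf_divide[OF bb_summable])
  then show ?thesis unfolding flight_density_def F_def a_def[symmetric] q_def[symmetric] s_def[symmetric]
    by simp
qed

lemma normsq_axis:
  "(norm (z + r *\<^sub>R axis j 1))\<^sup>2 = (norm (z::real^3))\<^sup>2 + 2 * r * z $ j + r\<^sup>2"
  unfolding power2_norm_eq_inner
  by (simp add: inner_add_left inner_add_right inner_axis inner_commute algebra_simps power2_eq_square)

lemma sum_sq_norm: "(\<Sum>j\<in>UNIV. (z $ j)\<^sup>2) = (norm (z::real^3))\<^sup>2"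
  unfolding power2_norm_eq_inner inner_vec_def by (simp add: power2_eq_square)

lemma open_time: "c > 0 \<Longrightarrow> open {s::real. norm (z::real^3) < c * s}"
  by (intro open_Collect_less continuous_intros)

lemma open_space: "open {r::real. norm (z + r *\<^sub>R axis j 1) < (C::real)}"
  by (intro open_Collect_less continuous_intros)

definition gi :: "real \<Rightarrow> real \<Rightarrow> real" where "gi lam s = 1 / (pi * (exp (lam * s) - 1))"
definition gi1 :: "real \<Rightarrow> real \<Rightarrow> real" where
  "gi1 lam s = - (lam * exp (lam * s)) / (pi * (exp (lam * s) - 1)^2)"
definition gi2 :: "real \<Rightarrow> real \<Rightarrow> real" where
  "gi2 lam s = - (lam^2 * exp (lam * s)) / (pi * (exp (lam * s) - 1)^2)
      + 2 * lam^2 * exp (lam * s)^2 / (pi * (exp (lam * s) - 1)^3)"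

lemma gi_deriv: assumes "exp (lam * s) \<noteq> 1" shows "(gi lam has_real_derivative gi1 lam s) (at s)"
proof -
  have D: "((\<lambda>s. 1 / (pi * (exp (lam * s) - 1))) has_real_derivative
      - (1 * (pi * (exp (lam * s) * lam))) / (pi * (exp (lam * s) - 1))^2) (at s)"
    apply (rule derivative_eq_intros refl)+
    using assms by (auto simp: power2_eq_square)
  have e: "exp (lam * s) - 1 \<noteq> 0" using assms by simp
  show ?thesis unfolding gi_def[abs_def]
    by (rule DERIV_cong[OF D]) (use e in \<open>simp add: gi1_def divide_simps power2_eq_square\<close>)
qed

lemma gi1_deriv: assumes "exp (lam * s) \<noteq> 1" shows "(gi1 lam has_real_derivative gi2 lam s) (at s)"
proof -
  have e: "exp (lam * s) - 1 \<noteq> 0" using assms by simp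
  have D: "((\<lambda>s. - (lam * exp (lam * s)) / (pi * (exp (lam * s) - 1)^2)) has_real_derivative
      (- (lam * (exp (lam * s) * lam)) * (pi * (exp (lam * s) - 1)^2) - (- (lam * exp (lam * s))) *
          (pi * (2 * ((exp (lam * s) * lam) * (exp (lam * s) - 1)))))
       / ((pi * (exp (lam * s) - 1)^2) * (pi * (exp (lam * s) - 1)^2))) (at s)"
    apply (rule DERIV_divide)
      apply (rule derivative_eq_intros refl | simp)+
    using e by simp
  show ?thesis unfolding gi1_def[abs_def]
    by (rule DERIV_cong[OF D]) (use e in \<open>simp add: gi2_def divide_simps power2_eq_square power3_eq_cube; algebra\<close>)
qed




definition Qf :: "real \<Rightarrow> real^3 \<Rightarrow> real \<Rightarrow> real" where
  "Qf c z s = c\<^sup>2 * s\<^sup>2 - (norm z)\<^sup>2"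

definition Ut :: "real \<Rightarrow> real \<Rightarrow> real^3 \<Rightarrow> real \<Rightarrow> real" where
  "Ut c lam z s = lam / (2*c) * (gi lam s * (F1 (lam / (2*c)) (Qf c z s) * (2 * c\<^sup>2 * s))
       + gi1 lam s * F (lam / (2*c)) (Qf c z s))"

definition Utt :: "real \<Rightarrow> real \<Rightarrow> real^3 \<Rightarrow> real \<Rightarrow> real" where
  "Utt c lam z s = lam / (2*c) * (gi lam s * (F2 (lam / (2*c)) (Qf c z s) * (2 * c\<^sup>2 * s) * (2 * c\<^sup>2 * s)
        + F1 (lam / (2*c)) (Qf c z s) * (2 * c\<^sup>2))
      + 2 * (gi1 lam s * (F1 (lam / (2*c)) (Qf c z s) * (2 * c\<^sup>2 * s)))
      + gi2 lam s * F (lam / (2*c)) (Qf c z s))"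

lemma region:
  assumes c: "c > 0" and z: "norm z < c * t"
  shows "Qf c z t > 0" "t > 0"
proof -
  have "(norm z)\<^sup>2 < (c * t)\<^sup>2" using z by (intro power_strict_mono) auto
  then show "Qf c z t > 0" by (simp add: Qf_def power_mult_distrib)
  show "t > 0" using z c by (smt (verit) norm_ge_zero zero_less_mult_pos)
qed

lemma u_eq': "c > 0 \<Longrightarrow> norm z < c * t \<Longrightarrow>
   flight_density c lam z t = lam / (2*c) * (gi lam t * F (lam / (2*c)) (Qf c z t))"
  unfolding gi_def Qf_def using u_eq[of c z t lam] by (simp only: mult.assoc)

lemma Qf_deriv: "((\<lambda>s. Qf c z s) has_real_derivative 2 * c\<^sup>2 * s) (at s)"
proof -
  have D: "((\<lambda>s. c\<^sup>2 * s\<^sup>2 - (norm z)\<^sup>2) has_real_derivative c\<^sup>2 * (real 2 * (1 * s ^ (2 - Suc 0))) - 0) (at s)"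
    by (intro DERIV_diff DERIV_cmult DERIV_power DERIV_ident DERIV_const)
  show ?thesis unfolding Qf_def by (rule DERIV_cong[OF D]) (simp add: power2_eq_square)
qed

lemma expne: "(lam::real) > 0 \<Longrightarrow> t > 0 \<Longrightarrow> exp (lam * t) \<noteq> 1"
  using exp_gt_one[OF mult_pos_pos, of lam t] by fastforce

lemma dt_deriv:
  assumes c: "c > 0" and lam: "lam > 0" and z: "norm z < c * t"
  shows "((\<lambda>s. flight_density c lam z s) has_real_derivative Ut c lam z t) (at t)"
proof -
  note r = region[OF c z]
  have D: "((\<lambda>s. lam / (2*c) * (gi lam s * F (lam / (2*c)) (Qf c z s))) has_real_derivative Ut c lam z t) (at t)"
    unfolding Ut_def
    apply (rule DERIV_cmult)
    apply (rule DERIV_mult')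
     apply (rule gi_deriv, rule expne[OF lam r(2)])
    apply (rule DERIV_chain2[OF F_deriv Qf_deriv])
    apply (rule r)
    done
  show ?thesis
    by (rule has_field_derivative_transform_within_open[OF D open_time[OF c, of z]])
       (use z c u_eq' in auto)
qed

lemma dt_eq: "c > 0 \<Longrightarrow> lam > 0 \<Longrightarrow> norm z < c * t \<Longrightarrow> dt (flight_density c lam) z t = Ut c lam z t"
  unfolding dt_def by (rule DERIV_imp_deriv) (rule dt_deriv)

lemma dtt_deriv:
  assumes c: "c > 0" and lam: "lam > 0" and z: "norm z < c * t"
  shows "((\<lambda>s. dt (flight_density c lam) z s) has_real_derivative Utt c lam z t) (at t)"
proof -
  note r = region[OF c z]
  have D0: "((\<lambda>s. 2 * c\<^sup>2 * s) has_real_derivative 2 * c\<^sup>2 * 1) (at t)"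
    by (intro DERIV_cmult DERIV_ident)
  have D: "((\<lambda>s. Ut c lam z s) has_real_derivative
     lam / (2*c) * ((gi lam t * (F1 (lam / (2*c)) (Qf c z t) * (2 * c\<^sup>2 * 1) + F2 (lam / (2*c)) (Qf c z t) * (2 * c\<^sup>2 * t) * (2 * c\<^sup>2 * t))
       + gi1 lam t * (F1 (lam / (2*c)) (Qf c z t) * (2 * c\<^sup>2 * t)))
      + (gi1 lam t * (F1 (lam / (2*c)) (Qf c z t) * (2 * c\<^sup>2 * t)) + gi2 lam t * F (lam / (2*c)) (Qf c z t)))) (at t)"
    unfolding Ut_def[abs_def]
    apply (rule DERIV_cmult)
    apply (rule DERIV_add)
     apply (rule DERIV_mult')
      apply (rule gi_deriv, rule expne[OF lam r(2)])
     apply (rule DERIV_mult')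
      apply (rule DERIV_chain2[OF F1_deriv Qf_deriv], rule r)
     apply (rule D0)
    apply (rule DERIV_mult')
     apply (rule gi1_deriv, rule expne[OF lam r(2)])
    apply (rule DERIV_chain2[OF F_deriv Qf_deriv], rule r)
    done
  have D': "((\<lambda>s. Ut c lam z s) has_real_derivative Utt c lam z t) (at t)"
    by (rule DERIV_cong[OF D]) (simp add: Utt_def algebra_simps)
  show ?thesis
    by (rule has_field_derivative_transform_within_open[OF D' open_time[OF c, of z]])
       (use c lam z dt_eq in auto)
qed




definition Dy :: "real \<Rightarrow> real \<Rightarrow> 3 \<Rightarrow> real^3 \<Rightarrow> real \<Rightarrow> real" where
  "Dy c lam j z t = lam / (2*c) * (gi lam t * (F1 (lam / (2*c)) (Qf c z t) * (-2 * z $ j)))"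

definition Dyy :: "real \<Rightarrow> real \<Rightarrow> 3 \<Rightarrow> real^3 \<Rightarrow> real \<Rightarrow> real" where
  "Dyy c lam j z t = lam / (2*c) * (gi lam t * (F2 (lam / (2*c)) (Qf c z t) * (2 * z $ j) * (2 * z $ j)
      - 2 * F1 (lam / (2*c)) (Qf c z t)))"

lemma comp_axis: "(z + r *\<^sub>R axis j 1) $ j = z $ j + (r::real)"
  by (simp add: axis_def)

lemma Qr_deriv: "((\<lambda>r. Qf c (z + r *\<^sub>R axis j 1) t) has_real_derivative - (2 * z $ j + 2 * r)) (at r)"
proof -
  have e: "(\<lambda>r. Qf c (z + r *\<^sub>R axis j 1) t) = (\<lambda>r. c\<^sup>2 * t\<^sup>2 - ((norm z)\<^sup>2 + 2 * r * z $ j + r\<^sup>2))"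
    by (simp add: Qf_def normsq_axis)
  have D: "((\<lambda>r. c\<^sup>2 * t\<^sup>2 - ((norm z)\<^sup>2 + 2 * r * z $ j + r\<^sup>2)) has_real_derivative
      0 - (0 + 2 * 1 * z $ j + real 2 * (1 * r ^ (2 - Suc 0)))) (at r)"
    by (intro DERIV_diff DERIV_add DERIV_const DERIV_cmult DERIV_mult DERIV_power DERIV_ident
        DERIV_cmult_right)
  show ?thesis unfolding e by (rule DERIV_cong[OF D]) simp
qed

lemma Qr0: "Qf c (z + 0 *\<^sub>R axis j 1) t = Qf c z t" by simp

lemma dy_deriv:
  assumes c: "c > 0" and lam: "lam > 0" and z: "norm z < c * t"
  shows "((\<lambda>r. flight_density c lam (z + r *\<^sub>R axis j 1) t) has_real_derivative Dy c lam j z t) (at 0)"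
proof -
  note r = region[OF c z]
  have D: "((\<lambda>r. lam / (2*c) * (gi lam t * F (lam / (2*c)) (Qf c (z + r *\<^sub>R axis j 1) t))) has_real_derivative
     lam / (2*c) * (gi lam t * (F1 (lam / (2*c)) (Qf c (z + 0 *\<^sub>R axis j 1) t) * (- (2 * z $ j + 2 * 0))))) (at 0)"
    apply (rule DERIV_cmult)
    apply (rule DERIV_cmult)
    apply (rule DERIV_chain2[OF F_deriv Qr_deriv])
    using r by simp
  have D': "((\<lambda>r. lam / (2*c) * (gi lam t * F (lam / (2*c)) (Qf c (z + r *\<^sub>R axis j 1) t))) has_real_derivative
     Dy c lam j z t) (at 0)"
    by (rule DERIV_cong[OF D]) (simp add: Dy_def)
  show ?thesis
    by (rule has_field_derivative_transform_within_open[OF D' open_space[of z j "c*t"]])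
       (use z c u_eq' in auto)
qed

lemma dy_eq: "c > 0 \<Longrightarrow> lam > 0 \<Longrightarrow> norm z < c * t \<Longrightarrow> dy j (flight_density c lam) z t = Dy c lam j z t"
  unfolding dy_def by (rule DERIV_imp_deriv) (rule dy_deriv)

lemma dyy_deriv:
  assumes c: "c > 0" and lam: "lam > 0" and z: "norm z < c * t"
  shows "((\<lambda>s. dy j (flight_density c lam) (z + s *\<^sub>R axis j 1) t) has_real_derivative Dyy c lam j z t) (at 0)"
proof -
  note r = region[OF c z]
  have D0: "((\<lambda>s. -2 * (z $ j + s)) has_real_derivative -2 * (0 + 1)) (at 0)"
    by (intro DERIV_cmult DERIV_add DERIV_const DERIV_ident)
  have D: "((\<lambda>s. lam / (2*c) * (gi lam t * (F1 (lam / (2*c)) (Qf c (z + s *\<^sub>R axis j 1) t) * (-2 * (z $ j + s)))))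
     has_real_derivative
     lam / (2*c) * (gi lam t * (F1 (lam / (2*c)) (Qf c (z + 0 *\<^sub>R axis j 1) t) * (-2 * (0 + 1))
        + F2 (lam / (2*c)) (Qf c (z + 0 *\<^sub>R axis j 1) t) * (- (2 * z $ j + 2 * 0)) * (-2 * (z $ j + 0))))) (at 0)"
    apply (rule DERIV_cmult)
    apply (rule DERIV_cmult)
    apply (rule DERIV_mult')
     apply (rule DERIV_chain2[OF F1_deriv Qr_deriv])
    using r apply simp
    apply (rule D0)
    done
  have D': "((\<lambda>s. lam / (2*c) * (gi lam t * (F1 (lam / (2*c)) (Qf c (z + s *\<^sub>R axis j 1) t) * (-2 * (z $ j + s)))))
     has_real_derivative Dyy c lam j z t) (at 0)"
    by (rule DERIV_cong[OF D]) (simp add: Dyy_def algebra_simps)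
  show ?thesis
  proof (rule has_field_derivative_transform_within_open[OF D' open_space[of z j "c*t"]])
    show "0 \<in> {r. norm (z + r *\<^sub>R axis j 1) < c * t}" using z by simp
    fix x assume "x \<in> {r. norm (z + r *\<^sub>R axis j 1) < c * t}"
    then have "dy j (flight_density c lam) (z + x *\<^sub>R axis j 1) t = Dy c lam j (z + x *\<^sub>R axis j 1) t"
      using dy_eq c lam by auto
    then show "lam / (2*c) * (gi lam t * (F1 (lam / (2*c)) (Qf c (z + x *\<^sub>R axis j 1) t) * (-2 * (z $ j + x))))
       = dy j (flight_density c lam) (z + x *\<^sub>R axis j 1) t"
      by (simp only: Dy_def comp_axis)
  qed
qed




lemma Gamma_mhalf: "Gamma (-1/2 :: real) = -2 * sqrt pi"
proof -
  have ni: "(-1/2::real) \<notin> \<int>\<^sub>\<le>\<^sub>0"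
  proof
    assume "(-1/2::real) \<in> \<int>\<^sub>\<le>\<^sub>0"
    then obtain n :: int where "(-1/2::real) = of_int n" by (auto elim!: nonpos_Ints_cases)
    then have "(2 * n :: real) = -1" by simp
    then have "2 * n = (-1::int)" by linarith
    then show False by presburger
  qed
  have "Gamma (-1/2 + 1 :: real) = -1/2 * Gamma (-1/2)" by (rule Gamma_plus1[OF ni])
  then have "sqrt pi = -1/2 * Gamma (-1/2 :: real)" by (simp add: Gamma_one_half_real)
  then show ?thesis by simp
qed

lemma powr_m32: "q > 0 \<Longrightarrow> (q::real) powr (-3/2) = 1 / sqrt q ^ 3"
proof -
  assume q: "q > 0"
  have "sqrt q ^ 3 = (q powr (1/2)) ^ 3" using q by (simp add: powr_half_sqrt)
  also have "\<dots> = q powr (3/2)" using q by (simp add: powr_power)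
  finally have "q powr (3/2) = sqrt q ^ 3" by simp
  moreover have "q powr (-3/2) = inverse (q powr (3/2))" using powr_minus[of q "3/2"] by simp
  ultimately show ?thesis by (simp add: field_simps)
qed

lemma final_alg:
  fixes c lam t E q n2 F0 F1v F2v S3 sp :: real
  assumes c: "c > 0" and E: "E - 1 \<noteq> 0" and S3: "S3 > 0" and sp: "sp > 0" "sp * sp = pi"
    and q: "q = c^2 * t^2 - n2" and q0: "q > 0"
    and ode: "q * F2v + 2 * F1v - (lam / (2*c))^2 * F0 = - ((lam / (2*c)) / (2 * pi)) / S3"
  shows
   "lam / (2*c) * ((1 / (pi * (E - 1))) * (F2v * (2 * c\<^sup>2 * t) * (2 * c\<^sup>2 * t) + F1v * (2 * c\<^sup>2))
      + 2 * ((- (lam * E) / (pi * (E - 1)^2)) * (F1v * (2 * c\<^sup>2 * t)))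
      + (- (lam^2 * E) / (pi * (E - 1)^2) + 2 * lam^2 * E^2 / (pi * (E - 1)^3)) * F0)
    + 2 * lam * E / (E - 1) * (lam / (2*c) * ((1 / (pi * (E - 1))) * (F1v * (2 * c\<^sup>2 * t))
       + (- (lam * E) / (pi * (E - 1)^2)) * F0))
    - c\<^sup>2 * (lam / (2*c) * (1 / (pi * (E - 1))) * (4 * n2 * F2v - 6 * F1v))
    = - (lam\<^sup>2 / (E - 1)) * (lam / (2*c) * ((1 / (pi * (E - 1))) * F0))
      + lam\<^sup>2 / ((pi * sp) * (E - 1)) * ((1 / S3) / (-2 * sp))"
proof -
  have n2: "n2 = c^2 * t^2 - q" using q by simp
  have F2: "F2v = (- ((lam / (2*c)) / (2 * pi)) / S3 - 2 * F1v + (lam / (2*c))^2 * F0) / q"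
    using ode q0 by (simp add: field_simps)
  have pi: "pi = sp * sp" using sp by simp
  have ne: "c \<noteq> 0" "E - 1 \<noteq> 0" "S3 \<noteq> 0" "sp \<noteq> 0" "q \<noteq> 0" using c E S3 sp(1) q0 by auto
  show ?thesis unfolding n2 F2 pi using ne
    apply (simp add: divide_simps)
    apply algebra
    done
qed




lemma lap_eq:
  assumes c: "c > 0" and lam: "lam > 0" and y: "norm y < c * t"
  shows "laplacian (flight_density c lam) y t =
     lam / (2*c) * (1 / (pi * (exp (lam * t) - 1))) * (4 * (norm y)\<^sup>2 * F2 (lam / (2*c)) (Qf c y t) - 6 * F1 (lam / (2*c)) (Qf c y t))"
proof -
  define A where "A = lam / (2*c) * gi lam t * 4 * F2 (lam / (2*c)) (Qf c y t)"
  define B where "B = - (lam / (2*c) * gi lam t * 2 * F1 (lam / (2*c)) (Qf c y t))"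
  have e: "dy j (dy j (flight_density c lam)) y t = A * (y $ j)\<^sup>2 + B" for j
  proof -
    have "dy j (dy j (flight_density c lam)) y t = Dyy c lam j y t"
      unfolding dy_def[of j "dy j (flight_density c lam)"] by (rule DERIV_imp_deriv) (rule dyy_deriv[OF c lam y])
    then show ?thesis by (simp add: Dyy_def A_def B_def algebra_simps power2_eq_square)
  qed
  have "laplacian (flight_density c lam) y t = (\<Sum>j\<in>UNIV. A * (y $ j)\<^sup>2 + B)"
    unfolding laplacian_def e ..
  also have "\<dots> = A * (norm y)\<^sup>2 + 3 * B"
    by (simp add: sum.distrib sum_distrib_left[symmetric] sum_sq_norm)
  finally show ?thesis by (simp add: A_def B_def gi_def algebra_simps)
qed

theorem theorem3p5:
  fixes c lam :: real
  assumes "c > 0" and "lam > 0"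
  defines "u \<equiv> flight_density c lam"
  shows "\<forall>y t. t > 0 \<and> norm y < c * t \<longrightarrow>
           (\<lambda>s. u y s) differentiable (at t) \<and>
           (\<lambda>s. dt u y s) differentiable (at t) \<and>
           (\<forall>j. (\<lambda>s. u (y + s *\<^sub>R axis j 1) t) differentiable (at 0) \<and>
                (\<lambda>s. dy j u (y + s *\<^sub>R axis j 1) t) differentiable (at 0)) \<and>
           dt (dt u) y t + coef1 lam t * dt u y t - c\<^sup>2 * laplacian u y t
             = coef2 lam t * u y t + coef3 c lam y t"
proof (intro allI impI)
  fix y :: "real^3" and t :: real
  assume "t > 0 \<and> norm y < c * t"
  then have y: "norm y < c * t" by simp
  note c = assms(1) and lam = assms(2)
  note r = region[OF c y]
  have d1: "(\<lambda>s. u y s) differentiable (at t)"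
    unfolding u_def real_differentiable_def using dt_deriv[OF c lam y] by blast
  have d2: "(\<lambda>s. dt u y s) differentiable (at t)"
    unfolding u_def real_differentiable_def using dtt_deriv[OF c lam y] by blast
  have d3: "\<forall>j. (\<lambda>s. u (y + s *\<^sub>R axis j 1) t) differentiable (at 0) \<and>
                (\<lambda>s. dy j u (y + s *\<^sub>R axis j 1) t) differentiable (at 0)"
    unfolding u_def real_differentiable_def using dy_deriv[OF c lam y] dyy_deriv[OF c lam y] by blast
  have e1: "dt (dt u) y t = Utt c lam y t"
    unfolding u_def dt_def[of "dt (flight_density c lam)"] by (rule DERIV_imp_deriv) (rule dtt_deriv[OF c lam y])
  have e2: "dt u y t = Ut c lam y t" unfolding u_def by (rule dt_eq[OF c lam y])
  have e3: "u y t = lam / (2*c) * (gi lam t * F (lam / (2*c)) (Qf c y t))" unfolding u_def by (rule u_eq'[OF c y])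
  have e4: "laplacian u y t = lam / (2*c) * (1 / (pi * (exp (lam * t) - 1))) * (4 * (norm y)\<^sup>2 * F2 (lam / (2*c)) (Qf c y t) - 6 * F1 (lam / (2*c)) (Qf c y t))"
    unfolding u_def by (rule lap_eq[OF c lam y])
  have e5: "coef3 c lam y t = lam\<^sup>2 / ((pi * sqrt pi) * (exp (lam * t) - 1)) * ((1 / sqrt (Qf c y t) ^ 3) / (-2 * sqrt pi))"
  proof -
    have "sqrt (pi ^ 3) = pi * sqrt pi" by (simp add: power3_eq_cube real_sqrt_mult)
    then show ?thesis unfolding coef3_def Gamma_mhalf using powr_m32[OF r(1)] by (simp add: Qf_def)
  qed
  have E: "exp (lam * t) - 1 \<noteq> 0" using expne[OF lam r(2)] by simp
  have fin: "Utt c lam y t + coef1 lam t * Ut c lam y t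
      - c\<^sup>2 * (lam / (2*c) * (1 / (pi * (exp (lam * t) - 1))) * (4 * (norm y)\<^sup>2 * F2 (lam / (2*c)) (Qf c y t) - 6 * F1 (lam / (2*c)) (Qf c y t)))
      = coef2 lam t * (lam / (2*c) * (gi lam t * F (lam / (2*c)) (Qf c y t)))
        + lam\<^sup>2 / ((pi * sqrt pi) * (exp (lam * t) - 1)) * ((1 / sqrt (Qf c y t) ^ 3) / (-2 * sqrt pi))"
    unfolding Utt_def Ut_def coef1_def coef2_def gi_def gi1_def gi2_def
    by (rule final_alg[OF c E _ _ _ _ r(1) F_ode[OF r(1)]])
       (use r(1) in \<open>auto simp: Qf_def\<close>)
  show "(\<lambda>s. u y s) differentiable (at t) \<and>
           (\<lambda>s. dt u y s) differentiable (at t) \<and>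
           (\<forall>j. (\<lambda>s. u (y + s *\<^sub>R axis j 1) t) differentiable (at 0) \<and>
                (\<lambda>s. dy j u (y + s *\<^sub>R axis j 1) t) differentiable (at 0)) \<and>
           dt (dt u) y t + coef1 lam t * dt u y t - c\<^sup>2 * laplacian u y t
             = coef2 lam t * u y t + coef3 c lam y t"
    using d1 d2 d3 fin unfolding e1 e2 e3 e4 e5 by blast
qed


end
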